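(* Every orbit of the action of $\mathrm{Aut}(\mathbb{G})$ on $\mathbb{G}$ that is three-dimensional, namely every set $\mathscr{L}_a=\{(z_1+z_2,z_1z_2):z_1,z_2\in\mathbb{D},\ |\frac{z_1-z_2}{1-\overline{z_1}z_2}|=a\}$ with $a\in(0,1)$, is a strongly pseudoconvex real hypersurface in $\mathbb{G}$.
   Context: $\mathbb{D}$ is the open unit disc in $\mathbb{C}$ and $\mathbb{G}=\{(z_1+z_2,z_1z_2):z_1,z_2\in\mathbb{D}\}\subset\mathbb{C}^2$ is the symmetrized bidisc. Its holomorphic automorphism group is $\mathrm{Aut}(\mathbb{G})=\{H_\varphi:\varphi\in\mathrm{Aut}(\mathbb{D})\}$, where $H_\varphi(z_1+z_2,z_1z_2)=(\varphi(z_1)+\varphi(z_2),\varphi(z_1)\varphi(z_2))$. The orbits of this action are the sets $\mathscr{L}_a$, $a\in[0,1)$; $\mathscr{L}_0=\{(2z,z^2):z\in\mathbb{D}\}$ is a complex curve and the others are real three-dimensional. *)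

theory Defs
  imports "HOL-Analysis.Analysis"
begin

definition unit_disc :: "complex set" where
  "unit_disc = {z. cmod z < 1}"

definition symmetrized_bidisc :: "(complex \<times> complex) set" where
  "symmetrized_bidisc =
     {(z1 + z2, z1 * z2) | z1 z2. z1 \<in> unit_disc \<and> z2 \<in> unit_disc}"

definition orbit_L :: "real \<Rightarrow> (complex \<times> complex) set" where
  "orbit_L a =
     {(z1 + z2, z1 * z2) | z1 z2. z1 \<in> unit_disc \<and> z2 \<in> unit_disc \<and>
        cmod ((z1 - z2) / (1 - cnj z1 * z2)) = a}"

definition cmulI :: "complex \<times> complex \<Rightarrow> complex \<times> complex" where
  "cmulI w = (\<i> * fst w, \<i> * snd w)"

definition C2_with_derivs ::
  "(complex \<times> complex) set \<Rightarrow> (complex \<times> complex \<Rightarrow> real)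
   \<Rightarrow> (complex \<times> complex \<Rightarrow> (complex \<times> complex) \<Rightarrow>\<^sub>L real)
   \<Rightarrow> (complex \<times> complex \<Rightarrow> (complex \<times> complex) \<Rightarrow>\<^sub>L ((complex \<times> complex) \<Rightarrow>\<^sub>L real))
   \<Rightarrow> bool" where
  "C2_with_derivs U \<rho> \<rho>' \<rho>'' \<longleftrightarrow>
     (\<forall>x\<in>U. (\<rho> has_derivative blinfun_apply (\<rho>' x)) (at x)) \<and>
     (\<forall>x\<in>U. (\<rho>' has_derivative blinfun_apply (\<rho>'' x)) (at x)) \<and>
     continuous_on U \<rho>''"

text \<open>The complex tangent space is \<open>{w. d\<rho>(x) w = 0 \<and> d\<rho>(x)(J w) = 0}\<close>, and the Levi form
  \<open>\<Sum> \<rho>_{j\<bar>k} w_j \<bar>w_k\<close> equals \<open>(1/4)(D\<^sup>2\<rho>(x)(w,w) + D\<^sup>2\<rho>(x)(Jw,Jw))\<close>.\<close>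
definition levi_form :: "(complex \<times> complex) \<Rightarrow>\<^sub>L ((complex \<times> complex) \<Rightarrow>\<^sub>L real)
   \<Rightarrow> complex \<times> complex \<Rightarrow> real" where
  "levi_form H w = (H w w + H (cmulI w) (cmulI w)) / 4"

definition levi_pos_def_at ::
  "(complex \<times> complex \<Rightarrow> (complex \<times> complex) \<Rightarrow>\<^sub>L real)
   \<Rightarrow> (complex \<times> complex \<Rightarrow> (complex \<times> complex) \<Rightarrow>\<^sub>L ((complex \<times> complex) \<Rightarrow>\<^sub>L real))
   \<Rightarrow> complex \<times> complex \<Rightarrow> bool" where
  "levi_pos_def_at \<rho>' \<rho>'' x \<longleftrightarrow>
     (\<forall>w. w \<noteq> 0 \<and> \<rho>' x w = 0 \<and> \<rho>' x (cmulI w) = 0 \<longrightarrow> levi_form (\<rho>'' x) w > 0)"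

definition strongly_pseudoconvex_hypersurface ::
  "(complex \<times> complex) set \<Rightarrow> (complex \<times> complex) set \<Rightarrow> bool" where
  "strongly_pseudoconvex_hypersurface M \<Omega> \<longleftrightarrow>
     M \<subseteq> \<Omega> \<and>
     (\<forall>p\<in>M. \<exists>U \<rho> \<rho>' \<rho>''. open U \<and> p \<in> U \<and> U \<subseteq> \<Omega> \<and>
        C2_with_derivs U \<rho> \<rho>' \<rho>'' \<and>
        M \<inter> U = {x\<in>U. \<rho> x = 0} \<and>
        (\<forall>x\<in>M \<inter> U. \<rho>' x \<noteq> 0) \<and>
        (\<forall>x\<in>M \<inter> U. levi_pos_def_at \<rho>' \<rho>'' x))"

end

theory Submission imports Defs "HOL-Homology.Invariance_of_Domain"
begin

definition gg :: "complex \<times> complex \<Rightarrow> complex" where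
  "gg x = (fst x)^2 - 4 * snd x"
definition EE :: "complex \<times> complex \<Rightarrow> real" where
  "EE x = 2 + 2 * (cmod (snd x))^2 - (cmod (fst x))^2"
definition rho :: "real \<Rightarrow> complex \<times> complex \<Rightarrow> real" where
  "rho a x = (2 - a^2)^2 * (cmod (gg x))^2 - a^4 * (EE x)^2"
definition al :: "real \<Rightarrow> complex \<times> complex \<Rightarrow> complex" where
  "al a x = complex_of_real (4 * (2-a^2)^2) * gg x * cnj (fst x)
          + complex_of_real (4 * a^4 * EE x) * fst x"
definition be :: "real \<Rightarrow> complex \<times> complex \<Rightarrow> complex" where
  "be a x = - complex_of_real (8 * (2-a^2)^2) * gg x - complex_of_real (8 * a^4 * EE x) * snd x"
definition Dg :: "complex \<times> complex \<Rightarrow> complex \<times> complex \<Rightarrow> complex" where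
  "Dg x v = 2 * fst x * fst v - 4 * snd v"
definition DE :: "complex \<times> complex \<Rightarrow> complex \<times> complex \<Rightarrow> real" where
  "DE x v = 4 * Re (cnj (snd x) * snd v) - 2 * Re (cnj (fst x) * fst v)"
definition Dal :: "real \<Rightarrow> complex \<times> complex \<Rightarrow> complex \<times> complex \<Rightarrow> complex" where
  "Dal a x v = complex_of_real (4 * (2-a^2)^2) * (Dg x v * cnj (fst x) + gg x * cnj (fst v))
     + complex_of_real (4 * a^4) * (complex_of_real (DE x v) * fst x + complex_of_real (EE x) * fst v)"
definition Dbe :: "real \<Rightarrow> complex \<times> complex \<Rightarrow> complex \<times> complex \<Rightarrow> complex" where
  "Dbe a x v = - complex_of_real (8 * (2-a^2)^2) * Dg x v
     - complex_of_real (8 * a^4) * (complex_of_real (DE x v) * snd x + complex_of_real (EE x) * snd v)"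

definition lf :: "complex \<times> complex \<Rightarrow> complex \<times> complex \<Rightarrow> real" where
  "lf ab w = Re (cnj (fst ab) * fst w) + Re (cnj (snd ab) * snd w)"

lemma bl_lf: "bounded_linear (lf ab)"
  unfolding lf_def
  by (intro bounded_linear_intros bounded_linear_add bounded_linear_compose[OF bounded_linear_Re]
      bounded_linear_compose[OF bounded_linear_mult_right] bounded_linear_fst bounded_linear_snd)

definition Tm :: "complex \<times> complex \<Rightarrow> ((complex \<times> complex) \<Rightarrow>\<^sub>L real)" where
  "Tm ab = Blinfun (lf ab)"

lemma Tm_apply: "blinfun_apply (Tm ab) w = lf ab w"
  unfolding Tm_def using bl_lf bounded_linear_Blinfun_apply by metis

lemma bl_Tm: "bounded_linear Tm"
proof (rule bounded_linear_intro[where K=2])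
  fix x y show "Tm (x + y) = Tm x + Tm y"
    by (rule blinfun_eqI) (simp add: Tm_apply lf_def algebra_simps plus_blinfun.rep_eq)
next
  fix r x show "Tm (r *\<^sub>R x) = r *\<^sub>R Tm x"
    by (rule blinfun_eqI) (simp add: Tm_apply lf_def algebra_simps scaleR_conv_of_real scaleR_blinfun.rep_eq)
next
  fix x :: "complex \<times> complex"
  have "norm (Tm x) \<le> norm (fst x) + norm (snd x)"
  proof (rule norm_blinfun_bound)
    fix w :: "complex \<times> complex"
    have "norm (Tm x w) \<le> cmod (cnj (fst x) * fst w) + cmod (cnj (snd x) * snd w)"
      unfolding Tm_apply lf_def real_norm_def
      by (rule order_trans[OF abs_triangle_ineq add_mono[OF abs_Re_le_cmod abs_Re_le_cmod]])
    also have "\<dots> \<le> norm (fst x) * norm w + norm (snd x) * norm w"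
    proof -
      have "norm (fst w) \<le> norm w" "norm (snd w) \<le> norm w"
        by (metis norm_fst_le prod.collapse) (metis norm_snd_le prod.collapse)
      thus ?thesis by (simp add: norm_mult add_mono mult_left_mono)
    qed
    finally show "norm (Tm x w) \<le> (norm (fst x) + norm (snd x)) * norm w"
      by (simp add: algebra_simps)
  qed simp
  also have "\<dots> \<le> norm x * 2"
  proof -
    have "norm (fst x) \<le> norm x" "norm (snd x) \<le> norm x"
      by (metis norm_fst_le prod.collapse) (metis norm_snd_le prod.collapse)
    thus ?thesis by simp
  qed
  finally show "norm (Tm x) \<le> norm x * 2" .
qed

lemma rho_poly: "rho a = (\<lambda>x. (2 - a^2)^2 * ((Re (fst x) * Re (fst x) - Im (fst x) * Im (fst x) - 4 * Re (snd x))^2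
   + (2 * Re (fst x) * Im (fst x) - 4 * Im (snd x))^2)
   - a^4 * (2 + 2 * (Re (snd x)^2 + Im (snd x)^2) - (Re (fst x)^2 + Im (fst x)^2))^2)"
  unfolding rho_def gg_def EE_def cmod_power2 by (rule ext) (simp add: power2_eq_square algebra_simps)

lemma rho_deriv: "(rho a has_derivative lf (al a x, be a x)) (at x)"
  unfolding rho_poly
  apply (rule has_derivative_eq_rhs)
   apply (rule derivative_eq_intros refl)+
  apply (rule ext)
  unfolding lf_def al_def be_def gg_def EE_def cmod_power2
  apply (simp add: power2_eq_square algebra_simps)
  done

lemma EE_deriv: "(EE has_derivative DE x) (at x)"
proof -
  have e: "EE = (\<lambda>x. 2 + 2 * (Re (snd x)^2 + Im (snd x)^2) - (Re (fst x)^2 + Im (fst x)^2))"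
    unfolding EE_def cmod_power2 by (rule ext) simp
  show ?thesis unfolding e
    apply (rule has_derivative_eq_rhs)
     apply (rule derivative_eq_intros refl)+
    apply (rule ext)
    apply (simp add: DE_def power2_eq_square algebra_simps)
    done
qed

lemma gg_deriv: "(gg has_derivative Dg x) (at x)"
  unfolding gg_def
  apply (rule has_derivative_eq_rhs)
   apply (rule derivative_eq_intros refl)+
  apply (rule ext)
  apply (simp add: Dg_def power2_eq_square algebra_simps)
  done

lemma albe_deriv: "((\<lambda>x. (al a x, be a x)) has_derivative (\<lambda>v. (Dal a x v, Dbe a x v))) (at x)"
  unfolding al_def be_def
  apply (rule has_derivative_eq_rhs)
   apply (rule derivative_eq_intros refl gg_deriv EE_deriv)+
  apply (rule ext)
  apply (simp add: Dal_def Dbe_def algebra_simps)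
  done

definition rho1 :: "real \<Rightarrow> complex \<times> complex \<Rightarrow> (complex \<times> complex) \<Rightarrow>\<^sub>L real" where
  "rho1 a x = Tm (al a x, be a x)"
definition rho2 :: "real \<Rightarrow> complex \<times> complex \<Rightarrow> (complex \<times> complex) \<Rightarrow>\<^sub>L ((complex \<times> complex) \<Rightarrow>\<^sub>L real)" where
  "rho2 a x = Blinfun (\<lambda>v. Tm (Dal a x v, Dbe a x v))"

lemma rho1_deriv0: "((rho1 a) has_derivative (\<lambda>v. Tm (Dal a x v, Dbe a x v))) (at x)"
  unfolding rho1_def[abs_def] by (rule bounded_linear.has_derivative[OF bl_Tm albe_deriv])

lemma rho2_apply: "blinfun_apply (rho2 a x) v = Tm (Dal a x v, Dbe a x v)"
  unfolding rho2_def using has_derivative_bounded_linear[OF rho1_deriv0] bounded_linear_Blinfun_apply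
  by metis

lemma rho2_apply2: "blinfun_apply (blinfun_apply (rho2 a x) v) w = lf (Dal a x v, Dbe a x v) w"
  by (simp add: rho2_apply Tm_apply)

lemma rho1_apply: "blinfun_apply (rho1 a x) w = lf (al a x, be a x) w"
  by (simp add: rho1_def Tm_apply)

lemma rho1_apply': "blinfun_apply (rho1 a x) = lf (al a x, be a x)"
  by (rule ext) (simp add: rho1_apply)

lemma rho1_deriv: "((rho1 a) has_derivative blinfun_apply (rho2 a x)) (at x)"
  using rho1_deriv0 by (simp add: rho2_apply[abs_def])

lemma rho2_cont: "continuous_on S (rho2 a)"
  apply (rule continuous_on_blinfun_componentwise)
  apply (rule continuous_on_blinfun_componentwise)
  unfolding rho2_apply2 lf_def Dal_def Dbe_def Dg_def DE_def gg_def EE_def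
  apply (intro continuous_intros)
  done

lemma C2: "C2_with_derivs U (rho a) (rho1 a) (rho2 a)"
  unfolding C2_with_derivs_def
  using rho_deriv rho1_deriv rho2_cont by (simp add: rho1_apply')

lemma levi_formula:
  "levi_form (rho2 a x) w = (2-a^2)^2 * (cmod (2 * fst x * fst w - 4 * snd w))^2
     - a^4 * (2 * EE x * (2 * (cmod (snd w))^2 - (cmod (fst w))^2)
              + 2 * (cmod (2 * cnj (snd x) * snd w - cnj (fst x) * fst w))^2)"
  unfolding levi_form_def rho2_apply2 lf_def Dal_def Dbe_def Dg_def DE_def gg_def EE_def cmulI_def cmod_power2
  apply (simp add: power2_eq_square)
  apply Groebner_Basis.algebra
  done



lemma Phi_W:
  fixes s p g :: complex and e :: real
  assumes "g = s^2 - 4 * p" "e = 2 + 2 * (cmod p)^2 - (cmod s)^2"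
  shows "(cmod (2* cnj p * (s * e + g* cnj s) - cnj s * (2 * e + 2 * g* cnj p)))^2
     - e * (2 * (cmod (s * e + g* cnj s))^2 - (cmod (2 * e + 2 * g* cnj p))^2) = 4 * e * (e^2 - (cmod g)^2)"
  unfolding assms cmod_power2
  apply (simp add: power2_eq_square)
  apply Groebner_Basis.algebra
  done

lemma levi_pos:
  fixes s p g w1 w2 :: complex and e a :: real
  assumes a: "0 < a" "a < 1" and e: "e > 0" and p: "cmod p < 1"
    and rel: "(2-a^2)* cmod g = a^2 * e"
    and gdef: "g = s^2 - 4 * p" and edef: "e = 2 + 2 * (cmod p)^2 - (cmod s)^2"
    and tang: "complex_of_real ((2-a^2)^2) * cnj g * (2 * s * w1 - 4 * w2)
               = complex_of_real (2 * a^4 * e) * (2* cnj p * w2 - cnj s * w1)"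
    and w: "w1 \<noteq> 0 \<or> w2 \<noteq> 0"
  shows "(2-a^2)^2 * (cmod (2 * s * w1 - 4 * w2))^2
     - a^4 * (2 * e * (2 * (cmod w2)^2 - (cmod w1)^2) + 2 * (cmod (2* cnj p * w2 - cnj s * w1))^2) > 0"
proof -
  define G where "G = 2 * s * w1 - 4 * w2"
  define L where "L = 2* cnj p * w2 - cnj s * w1"
  define k where "k = 2 - a^2"
  have "a * a < 1" using mult_strict_mono[of a 1 a 1] a by simp
  hence k: "k > 0" "a^2 < k" unfolding k_def by (simp_all add: power2_eq_square)
  have a2: "a^2 > 0" using a by simp
  have H1: "complex_of_real (k^2) * cnj g * G = complex_of_real (2 * a^4 * e) * L"
    using tang unfolding G_def L_def k_def .
  have "k^2 * cmod g * cmod G = 2 * a^4 * e * cmod L"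
    using arg_cong[OF H1, of cmod] e k a by (simp add: norm_mult norm_power abs_mult)
  hence "k * (a^2 * e) * cmod G = 2 * a^4 * e* cmod L"
    using rel unfolding k_def[symmetric] by (simp add: power2_eq_square algebra_simps)
  hence "(a^2 * e) * (k * cmod G) = (a^2 * e) * (2 * a^2 * cmod L)"
    by (simp add: power4_eq_xxxx power2_eq_square mult_ac)
  hence "k * cmod G = 2 * a^2 * cmod L"
    using e a by simp
  hence "(k * cmod G)^2 = (2 * a^2 * cmod L)^2" by simp
  hence H2: "k^2 * (cmod G)^2 = 4 * a^4 * (cmod L)^2"
    by (simp add: power4_eq_xxxx power2_eq_square mult_ac)
  have "(k * cmod g)^2 = (a^2 * e)^2" using rel unfolding k_def[symmetric] by simp
  hence kg: "k^2 * (cmod g)^2 = a^4 * e^2"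
    by (simp add: power4_eq_xxxx power2_eq_square mult_ac)
  have "complex_of_real (k^2) * (cnj g * g) * G = complex_of_real (2 * a^4 * e) * L * g"
    using arg_cong[OF H1, of "\<lambda>z. z * g"] by (simp add: algebra_simps)
  moreover have cgg: "cnj g * g = complex_of_real ((cmod g)^2)"
    by (subst complex_norm_square) (rule mult.commute)
  ultimately have "complex_of_real (k^2 * (cmod g)^2) * G = complex_of_real (2 * a^4 * e) * L * g"
    by (simp only: of_real_mult mult.assoc)
  hence "complex_of_real (a^4 * e^2) * G = complex_of_real (2 * a^4 * e) * L * g"
    using kg by simp
  hence "complex_of_real (a^4 * e) * (complex_of_real e * G) = complex_of_real (a^4 * e) * (2 * g * L)"
    by (simp add: power2_eq_square algebra_simps)
  hence H3: "complex_of_real e * G = 2 * g * L"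
    using e a by simp
  define W1 where "W1 = 2 * e + 2 * g* cnj p"
  define W2 where "W2 = s * e + g* cnj s"
  have lin: "w1 * W2 = w2 * W1"
  proof -
    have "2 * (w1 * W2 - w2 * W1) = complex_of_real e * G - 2 * g * L"
      unfolding W1_def W2_def G_def L_def by (simp add: algebra_simps)
    thus ?thesis using H3 by simp
  qed
  have "cmod g < e"
  proof (rule ccontr)
    assume "\<not> cmod g < e"
    hence "k * e \<le> k * cmod g" using k by (intro mult_left_mono) auto
    moreover have "a^2 * e < k * e" using k e by (intro mult_strict_right_mono) auto
    ultimately show False using rel unfolding k_def by linarith
  qed
  hence gp: "cmod (g * cnj p) < e" using p
  proof -
    have "cmod g * cmod p \<le> cmod g" using p by (simp add: mult_left_le)
    thus ?thesis using \<open>cmod g < e\<close> by (simp add: norm_mult)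
  qed
  have W1: "W1 \<noteq> 0"
  proof
    assume "W1 = 0"
    hence "2 * (complex_of_real e + g * cnj p) = 0" unfolding W1_def by (simp add: algebra_simps)
    hence "complex_of_real e + g * cnj p = 0" by (metis mult_eq_0_iff zero_neq_numeral)
    hence "g * cnj p = - complex_of_real e" by (metis add.commute eq_neg_iff_add_eq_0)
    hence "cmod (g * cnj p) = e" using e by simp
    thus False using gp by simp
  qed
  have w1: "w1 \<noteq> 0" using w lin W1 by auto
  define t where "t = w1 / W1"
  have t: "t \<noteq> 0" using w1 W1 unfolding t_def by simp
  have w1e: "w1 = t * W1" unfolding t_def using W1 by simp
  have w2e: "w2 = t * W2" unfolding t_def using W1 lin by (simp add: field_simps)
  have Le: "L = t * (2* cnj p * W2 - cnj s * W1)" unfolding L_def w1e w2e by (simp add: algebra_simps)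
  have PhiW: "(cmod (2* cnj p * W2 - cnj s * W1))^2 - e * (2 * (cmod W2)^2 - (cmod W1)^2) = 4 * e * (e^2 - (cmod g)^2)"
    unfolding W1_def W2_def by (rule Phi_W[OF gdef edef])
  have pos: "4 * e * (e^2 - (cmod g)^2) > 0"
    using e \<open>cmod g < e\<close> by (simp add: power2_eq_square mult_strict_mono')
  have Phi: "(cmod L)^2 - e * (2 * (cmod w2)^2 - (cmod w1)^2) = (cmod t)^2 * (4 * e * (e^2 - (cmod g)^2))"
  proof -
    have n1: "cmod L = cmod t * cmod (2* cnj p * W2 - cnj s * W1)" unfolding Le by (simp only: norm_mult)
    have n2: "cmod w1 = cmod t * cmod W1" "cmod w2 = cmod t * cmod W2" unfolding w1e w2e by (simp_all only: norm_mult)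
    show ?thesis unfolding PhiW[symmetric] n1 n2 by (simp add: power_mult_distrib algebra_simps)
  qed
  have "(cmod t)^2 * (4 * e * (e^2 - (cmod g)^2)) > 0" using t pos by simp
  hence "(cmod L)^2 - e * (2 * (cmod w2)^2 - (cmod w1)^2) > 0" using Phi by simp
  hence "k^2 * (cmod G)^2 - a^4 * (2 * e * (2 * (cmod w2)^2 - (cmod w1)^2) + 2 * (cmod L)^2) > 0"
  proof -
    have "k^2 * (cmod G)^2 - a^4 * (2 * e * (2 * (cmod w2)^2 - (cmod w1)^2) + 2 * (cmod L)^2)
       = 2 * a^4 * ((cmod L)^2 - e * (2 * (cmod w2)^2 - (cmod w1)^2))"
      unfolding H2 by (simp add: algebra_simps)
    moreover have "2 * a^4 * ((cmod L)^2 - e * (2 * (cmod w2)^2 - (cmod w1)^2)) > 0"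
      using \<open>(cmod L)^2 - e * (2 * (cmod w2)^2 - (cmod w1)^2) > 0\<close> a by simp
    ultimately show ?thesis by simp
  qed
  thus ?thesis unfolding G_def L_def k_def .
qed


lemma u_EE: "EE (u1+u2, u1 * u2) = 2 * (cmod (1 - cnj u1 * u2))^2 - (cmod (u1-u2))^2"
  unfolding EE_def cmod_power2 by (simp add: power2_eq_square algebra_simps)

lemma u_gg: "gg (u1+u2, u1 * u2) = (u1-u2)^2"
  unfolding gg_def by (simp add: power2_eq_square algebra_simps)

lemma u_BA: "(cmod (1 - cnj u1 * u2))^2 - (cmod (u1-u2))^2 = (1-(cmod u1)^2) * (1-(cmod u2)^2)"
  unfolding cmod_power2 by (simp add: power2_eq_square algebra_simps)

lemma u_facts:
  fixes u1 u2 :: complex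
  assumes "cmod u1 < 1" "cmod u2 < 1"
  shows "(cmod (1 - cnj u1 * u2))^2 - (cmod (u1-u2))^2 > 0" "cmod (1 - cnj u1 * u2) > 0"
proof -
  have "(1-(cmod u1)^2) > 0" "(1-(cmod u2)^2) > 0" using assms
    by (simp_all add: abs_square_less_1)
  thus 1: "(cmod (1 - cnj u1 * u2))^2 - (cmod (u1-u2))^2 > 0" unfolding u_BA by simp
  hence "cmod (1 - cnj u1 * u2) \<noteq> 0" by (cases "cmod (1 - cnj u1 * u2) = 0") auto
  thus "cmod (1 - cnj u1 * u2) > 0" by simp
qed

lemma rho_zero_iff:
  fixes u1 u2 :: complex
  assumes a: "0 < a" "a < 1" and u: "cmod u1 < 1" "cmod u2 < 1"
  shows "rho a (u1+u2, u1 * u2) = 0 \<longleftrightarrow> cmod ((u1-u2)/(1 - cnj u1 * u2)) = a"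
proof -
  define A where "A = (cmod (u1-u2))^2"
  define B where "B = (cmod (1 - cnj u1 * u2))^2"
  have BA: "B - A > 0" using u_facts[OF u] unfolding A_def B_def by simp
  have A0: "A \<ge> 0" unfolding A_def by simp
  have Bp: "cmod (1 - cnj u1 * u2) > 0" using u_facts[OF u] by simp
  have "a * a < 1" using mult_strict_mono[of a 1 a 1] a by simp
  hence k: "2 - a^2 > 0" by (simp add: power2_eq_square)
  have g2: "(cmod (gg (u1+u2, u1 * u2)))^2 = A^2" unfolding u_gg A_def by (simp add: norm_power)
  have e2: "EE (u1+u2, u1 * u2) = 2 * B - A" unfolding u_EE A_def B_def by simp
  have r: "rho a (u1+u2, u1 * u2) = ((2-a^2) * A - a^2 * (2 * B-A)) * ((2-a^2) * A + a^2 * (2 * B-A))"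
    unfolding rho_def g2 e2 by (simp add: power2_eq_square power4_eq_xxxx algebra_simps)
  have p1: "a^2 * (2 * B-A) > 0" using BA A0 a by simp
  have p2: "(2-a^2) * A \<ge> 0" using k A0 by simp
  have pos: "(2-a^2) * A + a^2 * (2 * B-A) > 0" using p1 p2 by linarith
  have "rho a (u1+u2, u1 * u2) = 0 \<longleftrightarrow> (2-a^2) * A - a^2 * (2 * B-A) = 0"
    unfolding r using pos by simp
  also have "\<dots> \<longleftrightarrow> A = a^2 * B" by (simp add: algebra_simps)
  also have "\<dots> \<longleftrightarrow> cmod (u1-u2) = a * cmod (1 - cnj u1 * u2)"
    unfolding A_def B_def power_mult_distrib[symmetric]
    using a by (intro power2_eq_iff_nonneg) auto
  also have "\<dots> \<longleftrightarrow> cmod ((u1-u2)/(1 - cnj u1 * u2)) = a"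
    using Bp by (simp add: norm_divide field_simps)
  finally show ?thesis .
qed

lemma rel_aux: "(A::real) = a^2 * B \<Longrightarrow> (2-a^2) * A = a^2 * (2 * B - A)"
  by (simp add: algebra_simps)

lemma at_La:
  assumes a: "0 < a" "a < 1" and x: "x \<in> orbit_L a"
  shows "EE x > 0" "cmod (snd x) < 1" "(2-a^2)* cmod (gg x) = a^2 * EE x" "rho a x = 0"
proof -
  obtain u1 u2 where x: "x = (u1+u2, u1 * u2)" and u: "cmod u1 < 1" "cmod u2 < 1"
    and m: "cmod ((u1-u2)/(1 - cnj u1 * u2)) = a"
    using x unfolding orbit_L_def unit_disc_def by blast
  show "rho a x = 0" using rho_zero_iff[OF a u] m x by simp
  define A where "A = (cmod (u1-u2))^2"
  define B where "B = (cmod (1 - cnj u1 * u2))^2"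
  have BA: "B - A > 0" using u_facts[OF u] unfolding A_def B_def by simp
  have A0: "A \<ge> 0" unfolding A_def by simp
  have Bp: "cmod (1 - cnj u1 * u2) > 0" using u_facts[OF u] by simp
  have "cmod (u1-u2) = a * cmod (1 - cnj u1 * u2)" using m Bp by (simp add: norm_divide field_simps)
  hence AB: "A = a^2 * B" unfolding A_def B_def by (simp add: power_mult_distrib)
  show "EE x > 0" unfolding x u_EE A_def[symmetric] B_def[symmetric] using BA A0 by simp
  have "cmod u1 * cmod u2 \<le> 1 * cmod u2" using u by (intro mult_right_mono) auto
  thus "cmod (snd x) < 1" using x u by (simp add: norm_mult)
  show "(2-a^2)* cmod (gg x) = a^2 * EE x"
  proof -
    have c1: "cmod (gg x) = A" unfolding x u_gg A_def by (simp add: norm_power)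
    have c2: "EE x = 2 * B - A" unfolding x u_EE A_def B_def by simp
    show ?thesis unfolding c1 c2 by (rule rel_aux[OF AB])
  qed
qed


lemma be_nz:
  fixes g p :: complex and e a :: real
  assumes a: "0 < a" "a < 1" and e: "e > 0" and p: "cmod p < 1"
    and rel: "(2-a^2) * cmod g = a^2 * e"
  shows "- complex_of_real (8 * (2-a^2)^2) * g - complex_of_real (8 * a^4 * e) * p \<noteq> 0"
proof
  define k where "k = 2 - a^2"
  assume H: "- complex_of_real (8 * (2-a^2)^2) * g - complex_of_real (8 * a^4 * e) * p = 0"
  have "- complex_of_real (8 * (2-a^2)^2) * g = complex_of_real (8 * a^4 * e) * p"
    using H by (simp only: right_minus_eq)
  hence "cmod (- complex_of_real (8 * (2-a^2)^2) * g) = cmod (complex_of_real (8 * a^4 * e) * p)"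
    by (rule arg_cong)
  hence "cmod (complex_of_real (8 * (2-a^2)^2)) * cmod g = cmod (complex_of_real (8 * a^4 * e)) * cmod p"
    by (simp only: mult_minus_left norm_minus_cancel norm_mult)
  hence "\<bar>8 * (2-a^2)^2\<bar> * cmod g = \<bar>8 * a^4 * e\<bar> * cmod p"
    by (simp only: norm_of_real)
  moreover have "\<bar>8 * (2-a^2)^2\<bar> = 8 * k^2" unfolding k_def by simp
  moreover have "\<bar>8 * a^4 * e\<bar> = 8 * a^4 * e" using e by simp
  ultimately have c: "8 * k^2 * cmod g = 8 * a^4 * e * cmod p" by simp
  have kg: "k^2 * cmod g = k * (a^2 * e)" using rel unfolding k_def[symmetric]
    by (simp add: power2_eq_square mult.assoc)
  have "(a^2 * e) * k = k^2 * cmod g" using kg by (simp only: mult.commute)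
  also have "\<dots> = a^4 * e * cmod p" using c by simp
  also have "\<dots> = (a^2 * e) * (a^2 * cmod p)" by (simp add: power4_eq_xxxx power2_eq_square mult_ac)
  finally have "(a^2 * e) * k = (a^2 * e) * (a^2 * cmod p)" .
  hence kk: "k = a^2 * cmod p" using a e by simp
  have "a * a < 1" using mult_strict_mono[of a 1 a 1] a by simp
  hence "a^2 < 1" by (simp add: power2_eq_square)
  moreover have "a^2 * cmod p \<le> a^2" using p by (simp add: mult_left_le)
  ultimately show False using kk unfolding k_def by linarith
qed

lemma tang_lemma:
  assumes "lf (al a x, be a x) w = 0" "lf (al a x, be a x) (cmulI w) = 0"
  shows "complex_of_real ((2-a^2)^2) * cnj (gg x) * (2 * fst x * fst w - 4 * snd w)
               = complex_of_real (2 * a^4 * EE x) * (2 * cnj (snd x) * snd w - cnj (fst x) * fst w)"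
proof -
  have Z: "cnj (al a x) * fst w + cnj (be a x) * snd w = 0"
    using assms by (simp add: lf_def cmulI_def complex_eq_iff)
  have "cnj (al a x) * fst w + cnj (be a x) * snd w = 2 * (complex_of_real ((2-a^2)^2) * cnj (gg x) * (2 * fst x * fst w - 4 * snd w)
      - complex_of_real (2 * a^4 * EE x) * (2 * cnj (snd x) * snd w - cnj (fst x) * fst w))"
    unfolding al_def be_def by (simp add: algebra_simps)
  hence "2 * (complex_of_real ((2-a^2)^2) * cnj (gg x) * (2 * fst x * fst w - 4 * snd w)
      - complex_of_real (2 * a^4 * EE x) * (2 * cnj (snd x) * snd w - cnj (fst x) * fst w)) = 0"
    using Z by metis
  hence "complex_of_real ((2-a^2)^2) * cnj (gg x) * (2 * fst x * fst w - 4 * snd w)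
      - complex_of_real (2 * a^4 * EE x) * (2 * cnj (snd x) * snd w - cnj (fst x) * fst w) = 0"
    by (metis mult_eq_0_iff zero_neq_numeral)
  thus ?thesis by (metis right_minus_eq)
qed

theorem theorem2p11:
  fixes a :: real
  assumes "0 < a" and "a < 1"
  shows "strongly_pseudoconvex_hypersurface (orbit_L a) symmetrized_bidisc"
proof -
  note a = assms
  have sub: "orbit_L a \<subseteq> symmetrized_bidisc" unfolding orbit_L_def symmetrized_bidisc_def by blast
  have nz: "rho1 a x \<noteq> 0" if x: "x \<in> orbit_L a" for x
  proof
    assume 0: "rho1 a x = 0"
    have "be a x \<noteq> 0" unfolding be_def
      using be_nz[OF a at_La(1)[OF a x] at_La(2)[OF a x] at_La(3)[OF a x]] .
    moreover have "lf (al a x, be a x) (0, be a x) = (cmod (be a x))^2"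
      unfolding lf_def cmod_power2 by (simp add: power2_eq_square)
    ultimately have "lf (al a x, be a x) (0, be a x) \<noteq> 0" by simp
    thus False using 0 by (simp add: rho1_apply[symmetric])
  qed
  have lev: "levi_pos_def_at (rho1 a) (rho2 a) x" if x: "x \<in> orbit_L a" for x
    unfolding levi_pos_def_at_def
  proof (intro allI impI)
    fix w :: "complex \<times> complex"
    assume w: "w \<noteq> 0 \<and> blinfun_apply (rho1 a x) w = 0 \<and> blinfun_apply (rho1 a x) (cmulI w) = 0"
    have t: "complex_of_real ((2-a^2)^2) * cnj (gg x) * (2 * fst x * fst w - 4 * snd w)
               = complex_of_real (2 * a^4 * EE x) * (2 * cnj (snd x) * snd w - cnj (fst x) * fst w)"
      using w by (intro tang_lemma) (simp_all add: rho1_apply)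
    have w12: "fst w \<noteq> 0 \<or> snd w \<noteq> 0" using w by (cases w) (auto simp: zero_prod_def)
    show "levi_form (rho2 a x) w > 0"
      unfolding levi_formula
      by (rule levi_pos[OF a at_La(1)[OF a x] at_La(2)[OF a x] at_La(3)[OF a x] gg_def EE_def t w12])
  qed
  have loc: "\<exists>U \<rho> \<rho>' \<rho>''. open U \<and> p0 \<in> U \<and> U \<subseteq> symmetrized_bidisc \<and>
        C2_with_derivs U \<rho> \<rho>' \<rho>'' \<and>
        orbit_L a \<inter> U = {x\<in>U. \<rho> x = 0} \<and>
        (\<forall>x\<in>orbit_L a \<inter> U. \<rho>' x \<noteq> 0) \<and>
        (\<forall>x\<in>orbit_L a \<inter> U. levi_pos_def_at \<rho>' \<rho>'' x)" if p0: "p0 \<in> orbit_L a" for p0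
  proof -
    obtain z1 z2 where p0e: "p0 = (z1+z2, z1 * z2)" and z: "cmod z1 < 1" "cmod z2 < 1"
      and m: "cmod ((z1-z2)/(1 - cnj z1 * z2)) = a"
      using p0 unfolding orbit_L_def unit_disc_def by blast
    have neq: "z1 \<noteq> z2" using m a by auto
    define r where "r = min (min (1 - cmod z1) (1 - cmod z2)) (cmod (z1-z2)/2)"
    have r: "r > 0" using z neq unfolding r_def by auto
    define S where "S = ball z1 r \<times> ball z2 r"
    define pi where "pi = (\<lambda>u::complex \<times> complex. (fst u + snd u, fst u * snd u))"
    define U where "U = pi ` S"
    have Sd: "cmod (fst u) < 1 \<and> cmod (snd u) < 1" if u: "u \<in> S" for u
    proof -
      have "fst u \<in> ball z1 r" "snd u \<in> ball z2 r" using u unfolding S_def mem_Times_iff by simp_all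
      hence d1: "dist z1 (fst u) < r" "dist z2 (snd u) < r" by simp_all
      have "cmod (fst u) \<le> cmod z1 + dist z1 (fst u)"
        using norm_triangle_sub[of "fst u" z1] by (simp add: dist_norm norm_minus_commute)
      moreover have "cmod (snd u) \<le> cmod z2 + dist z2 (snd u)"
        using norm_triangle_sub[of "snd u" z2] by (simp add: dist_norm norm_minus_commute)
      moreover have "r \<le> 1 - cmod z1" "r \<le> 1 - cmod z2" unfolding r_def by auto
      ultimately show ?thesis using d1 by linarith
    qed
    have inj: "inj_on pi S"
    proof (rule inj_onI)
      fix u v assume u: "u \<in> S" and v: "v \<in> S" and e: "pi u = pi v"
      obtain u1 u2 v1 v2 where uv: "u = (u1, u2)" "v = (v1, v2)" by (cases u, cases v) auto
      have s: "u1 + u2 = v1 + v2" and pr: "u1 * u2 = v1 * v2" using e uv unfolding pi_def by auto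
      have "(v1 - u1) * (v1 - u2) = 0"
      proof -
        have "(v1 - u1) * (v1 - u2) = v1 * v1 - v1 * (u1 + u2) + u1 * u2" by (simp add: algebra_simps)
        also have "\<dots> = 0" unfolding s pr by (simp add: algebra_simps)
        finally show ?thesis .
      qed
      hence "v1 = u1 \<or> v1 = u2" by auto
      thus "u = v"
      proof
        assume "v1 = u1" thus ?thesis using s uv by simp
      next
        assume h: "v1 = u2"
        have "fst v \<in> ball z1 r" "snd u \<in> ball z2 r" using u v unfolding S_def mem_Times_iff by simp_all
        hence d: "dist z1 v1 < r" "dist z2 u2 < r" using uv by simp_all
        have "dist z1 z2 \<le> dist z1 v1 + dist v1 z2" by (rule dist_triangle)
        moreover have "dist v1 z2 = dist z2 u2" using h by (simp add: dist_commute)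
        ultimately have "dist z1 z2 < 2 * r" using d by linarith
        moreover have "r \<le> cmod (z1 - z2) / 2" unfolding r_def by (rule min.cobounded2)
        hence "2 * r \<le> cmod (z1 - z2)" by linarith
        ultimately show ?thesis by (simp add: dist_norm)
      qed
    qed
    have cont: "continuous_on S pi" unfolding pi_def by (intro continuous_intros)
    have oS: "open S" unfolding S_def by (intro open_Times open_ball)
    have openU: "open U" unfolding U_def using invariance_of_domain[OF cont oS inj] .
    have zS: "(z1, z2) \<in> S" unfolding S_def using r by simp
    have p0U: "p0 \<in> U" unfolding U_def
    proof (rule image_eqI)
      show "p0 = pi (z1, z2)" unfolding pi_def p0e by simp
    qed (rule zS)
    have UG: "U \<subseteq> symmetrized_bidisc"
    proof
      fix y assume "y \<in> U"
      then obtain u where u: "u \<in> S" and y: "y = pi u" unfolding U_def by blast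
      show "y \<in> symmetrized_bidisc" unfolding symmetrized_bidisc_def unit_disc_def y pi_def
        using Sd[OF u] by blast
    qed
    have eq: "orbit_L a \<inter> U = {x\<in>U. rho a x = 0}"
    proof (intro equalityI subsetI)
      fix x assume "x \<in> orbit_L a \<inter> U" thus "x \<in> {x\<in>U. rho a x = 0}" using at_La(4)[OF a] by auto
    next
      fix x assume x: "x \<in> {x\<in>U. rho a x = 0}"
      then obtain u where u: "u \<in> S" and xe: "x = (fst u + snd u, fst u * snd u)"
        unfolding U_def pi_def by auto
      have "cmod ((fst u - snd u) / (1 - cnj (fst u) * snd u)) = a"
        using rho_zero_iff[OF a, of "fst u" "snd u"] Sd[OF u] x xe by simp
      hence "x \<in> orbit_L a" unfolding orbit_L_def unit_disc_def using Sd[OF u] xe by blast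
      thus "x \<in> orbit_L a \<inter> U" using x by simp
    qed
    show ?thesis
      apply (rule exI[of _ U], rule exI[of _ "rho a"], rule exI[of _ "rho1 a"], rule exI[of _ "rho2 a"])
      using openU p0U UG C2[of U a] eq nz lev by blast
  qed
  show ?thesis unfolding strongly_pseudoconvex_hypersurface_def using sub loc by blast
qed

end
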